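(* Let $p>0$, $p\neq1$, $\frac1p+\frac1q=1$, $\sigma\in\mathbb{R}$, $\delta\in\{-1,1\}$, let $H$ and $f$ be non-negative measurable functions on $\mathbb{R}$, and let $K(\sigma):=\int_{-\infty}^\infty H(t)|t|^{\sigma-1}dt$. Set $$J:=\int_{-\infty}^\infty|y|^{p\sigma-1}\left(\int_{-\infty}^\infty H(x^\delta y)f(x)\,dx\right)^pdy .$$ (i) If $p>1$, then $J\leq K^p(\sigma)\int_{-\infty}^\infty|x|^{p(1-\delta\sigma)-1}f^p(x)\,dx$. (ii) If $0<p<1$, then $J\geq K^p(\sigma)\int_{-\infty}^\infty|x|^{p(1-\delta\sigma)-1}f^p(x)\,dx$. *)

theory Defs
  imports "HOL-Analysis.Analysis"
begin

text \<open>Real power of an extended non-negative real, for exponent p > 0: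
  finite values are raised by powr, and infinity stays infinity.\<close>
definition enn_powr :: "ennreal \<Rightarrow> real \<Rightarrow> ennreal" where
  "enn_powr a p = (if a = top then top else ennreal (enn2real a powr p))"

definition Kfun :: "(real \<Rightarrow> real) \<Rightarrow> real \<Rightarrow> ennreal" where
  "Kfun H \<sigma> = (\<integral>\<^sup>+ t. ennreal (H t * \<bar>t\<bar> powr (\<sigma> - 1)) \<partial>lborel)"

definition Jfun :: "(real \<Rightarrow> real) \<Rightarrow> (real \<Rightarrow> real) \<Rightarrow> real \<Rightarrow> real \<Rightarrow> int \<Rightarrow> ennreal" where
  "Jfun H f p \<sigma> \<delta> = (\<integral>\<^sup>+ y. ennreal (\<bar>y\<bar> powr (p * \<sigma> - 1)) *
      enn_powr (\<integral>\<^sup>+ x. ennreal (H (x powi \<delta> * y) * f x) \<partial>lborel) p \<partial>lborel)"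

definition Ifun :: "(real \<Rightarrow> real) \<Rightarrow> real \<Rightarrow> real \<Rightarrow> int \<Rightarrow> ennreal" where
  "Ifun f p \<sigma> \<delta> = (\<integral>\<^sup>+ x. ennreal (\<bar>x\<bar> powr (p * (1 - of_int \<delta> * \<sigma>) - 1) * f x powr p) \<partial>lborel)"

end

theory Submission
  imports Defs
begin


lemma enn_powr_ennreal: "c \<ge> 0 \<Longrightarrow> enn_powr (ennreal c) p = ennreal (c powr p)"
  by (simp add: enn_powr_def)

lemma enn_powr_top[simp]: "enn_powr top p = top"
  by (simp add: enn_powr_def)

lemma enn_powr_0[simp]: "enn_powr 0 p = 0"
  by (simp add: enn_powr_def)

lemma enn_powr_1[simp]: "enn_powr a 1 = a"
  by (cases a) (auto simp: enn_powr_def)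

lemma enn_powr_mono: assumes "p > 0" "a \<le> b" shows "enn_powr a p \<le> enn_powr b p"
proof (cases b)
  case (real r)
  have "a \<noteq> top" using assms(2) real by (auto simp: top_unique)
  then obtain s where a: "a = ennreal s" "s \<ge> 0" by (cases a) auto
  have "s \<le> r" using assms(2) a real by (simp add: ennreal_le_iff)
  then show ?thesis using real a assms by (simp add: enn_powr_ennreal powr_mono2 ennreal_leI)
qed simp

lemma enn_powr_mult: assumes "p > 0" shows "enn_powr (a * b) p = enn_powr a p * enn_powr b p"
proof (cases a)
  case (real r)
  note ra = this
  show ?thesis
  proof (cases b)
    case (real s)
    have e: "ennreal r * ennreal s = ennreal (r * s)" using ra real by (simp add: ennreal_mult)
    have "enn_powr (ennreal (r * s)) p = ennreal ((r * s) powr p)"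
      using ra real by (intro enn_powr_ennreal) simp
    also have "\<dots> = ennreal (r powr p) * ennreal (s powr p)"
      using ra real by (simp add: powr_mult ennreal_mult)
    finally show ?thesis unfolding ra real e using ra real by (simp add: enn_powr_ennreal)
  next
    case top
    then show ?thesis using ra assms
      by (cases "r = 0") (auto simp: enn_powr_def ennreal_mult_top)
  qed
next
  case top
  then show ?thesis using assms
    by (cases b) (auto simp: enn_powr_def ennreal_top_mult)
qed

lemma enn_powr_powr: assumes "p > 0" "q > 0" shows "enn_powr (enn_powr a q) p = enn_powr a (q * p)"
  by (cases a) (auto simp: enn_powr_def powr_powr)

lemma enn_powr_add: assumes "r > 0" "s > 0" shows "enn_powr a r * enn_powr a s = enn_powr a (r + s)"
proof (cases a)
  case (real x)
  then show ?thesis using assms by (simp add: enn_powr_ennreal powr_add ennreal_mult)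
qed (use assms in \<open>simp add: enn_powr_def\<close>)

lemma measurable_enn_powr[measurable]:
  assumes [measurable]: "u \<in> borel_measurable M"
  shows "(\<lambda>x. enn_powr (u x) p) \<in> borel_measurable M"
  unfolding enn_powr_def by measurable

lemma enn_powr_pos: assumes "b > 0" "p > 0" shows "enn_powr b p > 0"
  using assms by (cases b) (auto simp: enn_powr_def)

lemma holder_interp:
  fixes F G :: "'a \<Rightarrow> real"
  assumes [measurable]: "F \<in> borel_measurable M" "G \<in> borel_measurable M"
    and nF: "\<And>x. F x \<ge> 0" and nG: "\<And>x. G x \<ge> 0" and a: "0 < a" "a < 1"
  shows "(\<integral>\<^sup>+x. ennreal (F x powr a * G x powr (1-a)) \<partial>M)
     \<le> enn_powr (\<integral>\<^sup>+x. F x \<partial>M) a * enn_powr (\<integral>\<^sup>+x. G x \<partial>M) (1-a)"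
proof -
  define A where "A = (\<integral>\<^sup>+x. F x \<partial>M)"
  define B where "B = (\<integral>\<^sup>+x. G x \<partial>M)"
  show ?thesis
  proof (cases "A = 0 \<or> B = 0")
    case True
    have hF: "AE x in M. F x = 0" if "A = 0"
      using that nF unfolding A_def by (subst (asm) nn_integral_0_iff_AE) (auto elim!: AE_mp intro!: AE_I2 antisym)
    have hG: "AE x in M. G x = 0" if "B = 0"
      using that nG unfolding B_def by (subst (asm) nn_integral_0_iff_AE) (auto elim!: AE_mp intro!: AE_I2 antisym)
    have "AE x in M. F x = 0 \<or> G x = 0"
      using True hF hG by (auto elim: AE_mp)
    then have "AE x in M. ennreal (F x powr a * G x powr (1-a)) = 0"
      by (rule AE_mp) auto
    then have "(\<integral>\<^sup>+x. ennreal (F x powr a * G x powr (1-a)) \<partial>M) = 0"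
      by (subst nn_integral_0_iff_AE) auto
    then show ?thesis by simp
  next
    case False
    then have Ap: "A > 0" and Bp: "B > 0" by (auto simp: zero_less_iff_neq_zero)
    show ?thesis
    proof (cases "A = top \<or> B = top")
      case True
      then have "enn_powr A a * enn_powr B (1-a) = top"
        using Ap Bp a enn_powr_pos[of A a] enn_powr_pos[of B "1-a"]
        by (auto simp: ennreal_mult_eq_top_iff)
      then show ?thesis unfolding A_def B_def by simp
    next
      case False
      with Ap Bp obtain \<alpha> \<beta> where A: "A = ennreal \<alpha>" "\<alpha> > 0" and B: "B = ennreal \<beta>" "\<beta> > 0"
        by (cases A; cases B) auto
      define c where "c = \<alpha> powr a * \<beta> powr (1-a)"
      have c: "c > 0" using A B by (simp add: c_def)
      have pw: "F x powr a * G x powr (1-a) \<le> c * (a/\<alpha>) * F x + c * ((1-a)/\<beta>) * G x" for x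
      proof (cases "F x = 0 \<or> G x = 0")
        case True
        then show ?thesis using nF[of x] nG[of x] A B a c
          by (auto intro!: add_nonneg_nonneg mult_nonneg_nonneg)
      next
        case False
        then have "F x > 0" "G x > 0" using nF[of x] nG[of x] by auto
        then have "(F x / \<alpha>) powr a * (G x / \<beta>) powr (1-a) \<le> a * (F x / \<alpha>) + (1-a) * (G x / \<beta>)"
          using A B a by (intro Youngs_inequality_0) auto
        then have "c * ((F x / \<alpha>) powr a * (G x / \<beta>) powr (1-a)) \<le> c * (a * (F x / \<alpha>) + (1-a) * (G x / \<beta>))"
          using c by (intro mult_left_mono) auto
        moreover have "c * ((F x / \<alpha>) powr a * (G x / \<beta>) powr (1-a)) = F x powr a * G x powr (1-a)"
        proof -
          have e1: "(F x / \<alpha>) powr a = F x powr a / \<alpha> powr a"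
            using A nF[of x] by (simp add: powr_divide)
          have e2: "(G x / \<beta>) powr (1-a) = G x powr (1-a) / \<beta> powr (1-a)"
            using B nG[of x] by (simp add: powr_divide)
          have p1: "\<alpha> powr a > 0" "\<beta> powr (1-a) > 0" using A B by auto
          show ?thesis unfolding e1 e2 c_def using p1
            by (simp add: field_simps)
        qed
        moreover have "c * (a * (F x / \<alpha>) + (1-a) * (G x / \<beta>)) = c * (a/\<alpha>) * F x + c * ((1-a)/\<beta>) * G x"
          by (simp add: distrib_left)
        ultimately show ?thesis by linarith
      qed
      have "(\<integral>\<^sup>+x. ennreal (F x powr a * G x powr (1-a)) \<partial>M)
          \<le> (\<integral>\<^sup>+x. ennreal (c * (a/\<alpha>)) * ennreal (F x) + ennreal (c * ((1-a)/\<beta>)) * ennreal (G x) \<partial>M)"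
      proof (intro nn_integral_mono)
        fix x
        have n1: "c * (a/\<alpha>) \<ge> 0" "c * ((1-a)/\<beta>) \<ge> 0" using A B a c by auto
        have n2: "c * (a/\<alpha>) * F x \<ge> 0" "c * ((1-a)/\<beta>) * G x \<ge> 0" using mult_nonneg_nonneg[OF n1(1) nF[of x]] mult_nonneg_nonneg[OF n1(2) nG[of x]] by auto
        have "ennreal (c * (a/\<alpha>)) * ennreal (F x) + ennreal (c * ((1-a)/\<beta>)) * ennreal (G x)
            = ennreal (c * (a/\<alpha>) * F x + c * ((1-a)/\<beta>) * G x)"
          using n1 n2 nF[of x] nG[of x] by (simp only: ennreal_plus ennreal_mult)
        then show "ennreal (F x powr a * G x powr (1-a)) \<le> ennreal (c * (a/\<alpha>)) * ennreal (F x) + ennreal (c * ((1-a)/\<beta>)) * ennreal (G x)"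
          using pw[of x] by (simp add: ennreal_leI)
      qed
      also have "\<dots> = ennreal (c * (a/\<alpha>)) * A + ennreal (c * ((1-a)/\<beta>)) * B"
        unfolding A_def B_def by (simp add: nn_integral_add nn_integral_cmult)
      also have "\<dots> = ennreal c"
      proof -
        have n1: "c * (a/\<alpha>) \<ge> 0" "c * ((1-a)/\<beta>) \<ge> 0" using A B a c by auto
        have "ennreal (c * (a/\<alpha>)) * A + ennreal (c * ((1-a)/\<beta>)) * B
            = ennreal (c * (a/\<alpha>) * \<alpha> + c * ((1-a)/\<beta>) * \<beta>)"
          using n1 A B by (simp only: ennreal_plus ennreal_mult mult_nonneg_nonneg less_imp_le)
        also have "c * (a/\<alpha>) * \<alpha> + c * ((1-a)/\<beta>) * \<beta> = c"
          using A B by (simp add: field_simps)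
        finally show ?thesis .
      qed
      also have "\<dots> = enn_powr A a * enn_powr B (1-a)"
        using A B by (simp add: enn_powr_ennreal c_def ennreal_mult)
      finally show ?thesis unfolding A_def B_def .
    qed
  qed
qed



lemma nn_integral_scale:
  fixes h :: "real \<Rightarrow> ennreal"
  assumes [measurable]: "h \<in> borel_measurable borel" and y: "y \<noteq> 0"
  shows "(\<integral>\<^sup>+x. h (x * y) \<partial>lborel) = ennreal (1 / \<bar>y\<bar>) * (\<integral>\<^sup>+t. h t \<partial>lborel)"
proof -
  have "(\<integral>\<^sup>+t. h t \<partial>lborel) = ennreal \<bar>y\<bar> * (\<integral>\<^sup>+x. h (0 + y * x) \<partial>lborel)"
    by (rule nn_integral_real_affine[OF assms(1) y])
  then have "ennreal (1 / \<bar>y\<bar>) * (\<integral>\<^sup>+t. h t \<partial>lborel)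
      = (ennreal (1 / \<bar>y\<bar>) * ennreal \<bar>y\<bar>) * (\<integral>\<^sup>+x. h (y * x) \<partial>lborel)"
    by (simp add: mult.assoc)
  also have "ennreal (1 / \<bar>y\<bar>) * ennreal \<bar>y\<bar> = 1"
    using y by (simp flip: ennreal_mult)
  finally show ?thesis by (simp add: mult.commute)
qed

lemma inner_y:
  fixes H :: "real \<Rightarrow> real" and x :: real
  assumes [measurable]: "H \<in> borel_measurable borel" and H: "\<And>t. H t \<ge> 0" and x: "x \<noteq> 0"
  shows "(\<integral>\<^sup>+y. ennreal (H (x * y) * \<bar>x * y\<bar> powr e * \<bar>y\<bar> powr (\<sigma> - 1 - e)) \<partial>lborel)
       = ennreal (\<bar>x\<bar> powr (e - \<sigma>)) * Kfun H \<sigma>"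
proof -
  define h where "h t = ennreal (H t * \<bar>t\<bar> powr e * \<bar>t / x\<bar> powr (\<sigma> - 1 - e))" for t
  have [measurable]: "h \<in> borel_measurable borel" unfolding h_def by measurable
  have "(\<integral>\<^sup>+y. ennreal (H (x * y) * \<bar>x * y\<bar> powr e * \<bar>y\<bar> powr (\<sigma> - 1 - e)) \<partial>lborel)
      = (\<integral>\<^sup>+y. h (y * x) \<partial>lborel)"
    using x by (intro nn_integral_cong) (simp add: h_def mult.commute)
  also have "\<dots> = ennreal (1 / \<bar>x\<bar>) * (\<integral>\<^sup>+t. h t \<partial>lborel)"
    by (rule nn_integral_scale[OF _ x]) measurable
  also have "(\<integral>\<^sup>+t. h t \<partial>lborel) = (\<integral>\<^sup>+t. ennreal (\<bar>x\<bar> powr (1 + e - \<sigma>)) * ennreal (H t * \<bar>t\<bar> powr (\<sigma> - 1)) \<partial>lborel)"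
  proof (intro nn_integral_cong)
    fix t :: real
    show "h t = ennreal (\<bar>x\<bar> powr (1 + e - \<sigma>)) * ennreal (H t * \<bar>t\<bar> powr (\<sigma> - 1))"
    proof (cases "t = 0")
      case True then show ?thesis by (simp add: h_def)
    next
      case False
      have d: "\<bar>t / x\<bar> powr (\<sigma> - 1 - e) = \<bar>t\<bar> powr (\<sigma> - 1 - e) * \<bar>x\<bar> powr (1 + e - \<sigma>)"
      proof -
        have "\<bar>t / x\<bar> powr (\<sigma> - 1 - e) = \<bar>t\<bar> powr (\<sigma> - 1 - e) / \<bar>x\<bar> powr (\<sigma> - 1 - e)"
          by (subst abs_divide, rule powr_divide)
        also have "\<dots> = \<bar>t\<bar> powr (\<sigma> - 1 - e) * \<bar>x\<bar> powr (- (\<sigma> - 1 - e))"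
          by (simp only: powr_minus divide_inverse)
        also have "- (\<sigma> - 1 - e) = 1 + e - \<sigma>" by simp
        finally show ?thesis .
      qed
      have m: "\<bar>t\<bar> powr e * \<bar>t\<bar> powr (\<sigma> - 1 - e) = \<bar>t\<bar> powr (\<sigma> - 1)"
        by (simp add: powr_add[symmetric])
      have "H t * \<bar>t\<bar> powr e * \<bar>t / x\<bar> powr (\<sigma> - 1 - e)
          = \<bar>x\<bar> powr (1 + e - \<sigma>) * (H t * (\<bar>t\<bar> powr e * \<bar>t\<bar> powr (\<sigma> - 1 - e)))"
        unfolding d by (simp add: mult_ac)
      also have "\<dots> = \<bar>x\<bar> powr (1 + e - \<sigma>) * (H t * \<bar>t\<bar> powr (\<sigma> - 1))"
        unfolding m ..
      finally have eq: "H t * \<bar>t\<bar> powr e * \<bar>t / x\<bar> powr (\<sigma> - 1 - e) = \<bar>x\<bar> powr (1 + e - \<sigma>) * (H t * \<bar>t\<bar> powr (\<sigma> - 1))" .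
      show ?thesis unfolding h_def eq by (rule ennreal_mult) (use H[of t] in auto)
    qed
  qed
  also have "\<dots> = ennreal (\<bar>x\<bar> powr (1 + e - \<sigma>)) * Kfun H \<sigma>"
    unfolding Kfun_def by (rule nn_integral_cmult) measurable
  also have "ennreal (1 / \<bar>x\<bar>) * (ennreal (\<bar>x\<bar> powr (1 + e - \<sigma>)) * Kfun H \<sigma>)
      = ennreal (1 / \<bar>x\<bar> * \<bar>x\<bar> powr (1 + e - \<sigma>)) * Kfun H \<sigma>"
  proof -
    have "ennreal (1 / \<bar>x\<bar>) * ennreal (\<bar>x\<bar> powr (1 + e - \<sigma>)) = ennreal (1 / \<bar>x\<bar> * \<bar>x\<bar> powr (1 + e - \<sigma>))"
      by (rule ennreal_mult[symmetric]) auto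
    then show ?thesis by (simp only: mult.assoc[symmetric])
  qed
  also have "1 / \<bar>x\<bar> * \<bar>x\<bar> powr (1 + e - \<sigma>) = \<bar>x\<bar> powr (e - \<sigma>)"
  proof -
    have ee: "1 + e - \<sigma> = 1 + (e - \<sigma>)" by simp
    have "\<bar>x\<bar> powr (1 + e - \<sigma>) = \<bar>x\<bar> powr 1 * \<bar>x\<bar> powr (e - \<sigma>)"
      unfolding ee by (rule powr_add)
    then show ?thesis using x by simp
  qed
  finally show ?thesis .
qed



lemma double_int:
  fixes H f :: "real \<Rightarrow> real"
  assumes [measurable]: "H \<in> borel_measurable borel" and H: "\<And>t. H t \<ge> 0"
    and [measurable]: "f \<in> borel_measurable borel" and f: "\<And>x. f x \<ge> 0"
  shows "(\<integral>\<^sup>+y. (\<integral>\<^sup>+x. ennreal (\<bar>y\<bar> powr (\<sigma> - 1 - e) * (H (x * y) * f x powr p * \<bar>x * y\<bar> powr e)) \<partial>lborel) \<partial>lborel)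
     = Kfun H \<sigma> * (\<integral>\<^sup>+x. ennreal (\<bar>x\<bar> powr (e - \<sigma>) * f x powr p) \<partial>lborel)"
proof -
  have "(\<integral>\<^sup>+y. (\<integral>\<^sup>+x. ennreal (\<bar>y\<bar> powr (\<sigma> - 1 - e) * (H (x * y) * f x powr p * \<bar>x * y\<bar> powr e)) \<partial>lborel) \<partial>lborel)
     = (\<integral>\<^sup>+x. (\<integral>\<^sup>+y. ennreal (\<bar>y\<bar> powr (\<sigma> - 1 - e) * (H (x * y) * f x powr p * \<bar>x * y\<bar> powr e)) \<partial>lborel) \<partial>lborel)"
    by (rule lborel_pair.Fubini') measurable
  also have "\<dots> = (\<integral>\<^sup>+x. ennreal (\<bar>x\<bar> powr (e - \<sigma>) * f x powr p) * Kfun H \<sigma> \<partial>lborel)"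
  proof (rule nn_integral_cong_AE)
    show "AE x in lborel. (\<integral>\<^sup>+y. ennreal (\<bar>y\<bar> powr (\<sigma> - 1 - e) * (H (x * y) * f x powr p * \<bar>x * y\<bar> powr e)) \<partial>lborel)
       = ennreal (\<bar>x\<bar> powr (e - \<sigma>) * f x powr p) * Kfun H \<sigma>"
      using AE_lborel_singleton[of 0]
    proof (rule AE_mp, intro AE_I2 impI)
      fix x :: real assume x: "x \<noteq> 0"
      have "(\<integral>\<^sup>+y. ennreal (\<bar>y\<bar> powr (\<sigma> - 1 - e) * (H (x * y) * f x powr p * \<bar>x * y\<bar> powr e)) \<partial>lborel)
          = (\<integral>\<^sup>+y. ennreal (f x powr p) * ennreal (H (x * y) * \<bar>x * y\<bar> powr e * \<bar>y\<bar> powr (\<sigma> - 1 - e)) \<partial>lborel)"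
        by (intro nn_integral_cong) (simp add: ennreal_mult'[symmetric] mult_ac)
      also have "\<dots> = ennreal (f x powr p) * (\<integral>\<^sup>+y. ennreal (H (x * y) * \<bar>x * y\<bar> powr e * \<bar>y\<bar> powr (\<sigma> - 1 - e)) \<partial>lborel)"
        by (rule nn_integral_cmult) measurable
      also have "\<dots> = ennreal (f x powr p) * (ennreal (\<bar>x\<bar> powr (e - \<sigma>)) * Kfun H \<sigma>)"
        by (subst inner_y[OF _ H x]) auto
      also have "\<dots> = ennreal (\<bar>x\<bar> powr (e - \<sigma>) * f x powr p) * Kfun H \<sigma>"
        by (simp add: ennreal_mult mult_ac)
      finally show "(\<integral>\<^sup>+y. ennreal (\<bar>y\<bar> powr (\<sigma> - 1 - e) * (H (x * y) * f x powr p * \<bar>x * y\<bar> powr e)) \<partial>lborel)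
       = ennreal (\<bar>x\<bar> powr (e - \<sigma>) * f x powr p) * Kfun H \<sigma>" .
    qed
  qed
  also have "\<dots> = Kfun H \<sigma> * (\<integral>\<^sup>+x. ennreal (\<bar>x\<bar> powr (e - \<sigma>) * f x powr p) \<partial>lborel)"
    by (subst mult.commute, rule nn_integral_cmult) measurable
  finally show ?thesis .
qed



lemma pw_gt:
  fixes u v w p s :: real
  assumes u: "u \<ge> 0" and v: "v \<ge> 0" and w: "w > 0" and p: "p > 0"
  shows "(u * w powr s) powr (1 - 1/p) * (u * v powr p * w powr (s * (1 - p))) powr (1 - (1 - 1/p)) = u * v"
proof (cases "u = 0")
  case False
  have e1: "(u * w powr s) powr (1 - 1/p) = u powr (1 - 1/p) * w powr (s * (1 - 1/p))"
    by (simp add: powr_mult powr_powr)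
  have e2: "(u * v powr p * w powr (s * (1 - p))) powr (1 - (1 - 1/p))
      = u powr (1/p) * v * w powr (s * (1 - p) * (1/p))"
    using v p by (simp add: powr_mult powr_powr powr_one)
  have e3: "u powr (1 - 1/p) * u powr (1/p) = u"
    using u by (simp add: powr_add[symmetric])
  have e4: "w powr (s * (1 - 1/p)) * w powr (s * (1 - p) * (1/p)) = 1"
  proof -
    have "s * (1 - 1/p) + s * (1 - p) * (1/p) = 0" using p by (simp add: field_simps)
    then show ?thesis using w by (simp add: powr_add[symmetric])
  qed
  have "(u * w powr s) powr (1 - 1/p) * (u * v powr p * w powr (s * (1 - p))) powr (1 - (1 - 1/p))
      = (u powr (1 - 1/p) * u powr (1/p)) * v * (w powr (s * (1 - 1/p)) * w powr (s * (1 - p) * (1/p)))"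
    unfolding e1 e2 by (simp add: mult_ac)
  then show ?thesis unfolding e3 e4 by simp
qed simp

lemma pw_lt:
  fixes u v w p s :: real
  assumes u: "u \<ge> 0" and v: "v \<ge> 0" and w: "w \<ge> 0" and p: "p > 0" "p < 1"
  shows "(u * v) powr p * (u * w powr s) powr (1 - p) = u * v powr p * w powr (s * (1 - p))"
proof (cases "u = 0")
  case False
  have "(u * v) powr p * (u * w powr s) powr (1 - p) = (u powr p * u powr (1 - p)) * v powr p * w powr (s * (1 - p))"
    by (simp add: powr_mult powr_powr mult_ac)
  also have "u powr p * u powr (1 - p) = u"
    using u by (simp add: powr_add[symmetric])
  finally show ?thesis .
qed simp



lemma core_gt:
  fixes H f :: "real \<Rightarrow> real"
  assumes [measurable]: "H \<in> borel_measurable borel" and H: "\<And>t. H t \<ge> 0"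
    and [measurable]: "f \<in> borel_measurable borel" and f: "\<And>x. f x \<ge> 0" and p: "p > 1"
  shows "(\<integral>\<^sup>+y. ennreal (\<bar>y\<bar> powr (p * \<sigma> - 1)) * enn_powr (\<integral>\<^sup>+x. ennreal (H (x * y) * f x) \<partial>lborel) p \<partial>lborel)
     \<le> enn_powr (Kfun H \<sigma>) p * (\<integral>\<^sup>+x. ennreal (\<bar>x\<bar> powr (p * (1 - \<sigma>) - 1) * f x powr p) \<partial>lborel)"
proof -
  define e where "e = (\<sigma> - 1) * (1 - p)"
  define K where "K = Kfun H \<sigma>"
  define \<Phi> where "\<Phi> y = (\<integral>\<^sup>+x. ennreal (H (x * y) * f x powr p * \<bar>x * y\<bar> powr e) \<partial>lborel)" for y
  define a where "a = 1 - 1/p"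
  have a: "0 < a" "a < 1" using p by (auto simp: a_def)
  have pt: "enn_powr (\<integral>\<^sup>+x. ennreal (H (x * y) * f x) \<partial>lborel) p
      \<le> ennreal ((1 / \<bar>y\<bar>) powr (p - 1)) * enn_powr K (p - 1) * \<Phi> y" if y: "y \<noteq> 0" for y
  proof -
    have "(\<integral>\<^sup>+x. ennreal (H (x * y) * f x) \<partial>lborel)
       = (\<integral>\<^sup>+x. ennreal ((H (x * y) * \<bar>x * y\<bar> powr (\<sigma> - 1)) powr a
            * (H (x * y) * f x powr p * \<bar>x * y\<bar> powr e) powr (1 - a)) \<partial>lborel)"
    proof (rule nn_integral_cong_AE)
      show "AE x in lborel. ennreal (H (x * y) * f x) = ennreal ((H (x * y) * \<bar>x * y\<bar> powr (\<sigma> - 1)) powr a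
            * (H (x * y) * f x powr p * \<bar>x * y\<bar> powr e) powr (1 - a))"
        using AE_lborel_singleton[of 0]
      proof (rule AE_mp, intro AE_I2 impI)
        fix x :: real assume "x \<noteq> 0"
        then have "\<bar>x * y\<bar> > 0" using y by auto
        then show "ennreal (H (x * y) * f x) = ennreal ((H (x * y) * \<bar>x * y\<bar> powr (\<sigma> - 1)) powr a
            * (H (x * y) * f x powr p * \<bar>x * y\<bar> powr e) powr (1 - a))"
          using pw_gt[where u="H (x * y)" and v="f x" and w="\<bar>x * y\<bar>" and p=p and s="\<sigma> - 1"] H[of "x * y"] f[of x] p
          unfolding a_def e_def by simp
      qed
    qed
    also have "\<dots> \<le> enn_powr (\<integral>\<^sup>+x. ennreal (H (x * y) * \<bar>x * y\<bar> powr (\<sigma> - 1)) \<partial>lborel) a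
        * enn_powr (\<Phi> y) (1 - a)"
      unfolding \<Phi>_def
      by (rule holder_interp[OF _ _ _ _ a]) (auto intro!: mult_nonneg_nonneg H f)
    also have "(\<integral>\<^sup>+x. ennreal (H (x * y) * \<bar>x * y\<bar> powr (\<sigma> - 1)) \<partial>lborel) = ennreal (1 / \<bar>y\<bar>) * K"
      unfolding K_def Kfun_def
      by (rule nn_integral_scale[OF _ y, where h="\<lambda>t. ennreal (H t * \<bar>t\<bar> powr (\<sigma> - 1))"]) measurable
    finally have le: "(\<integral>\<^sup>+x. ennreal (H (x * y) * f x) \<partial>lborel)
       \<le> enn_powr (ennreal (1 / \<bar>y\<bar>) * K) a * enn_powr (\<Phi> y) (1 - a)" .
    have "enn_powr (\<integral>\<^sup>+x. ennreal (H (x * y) * f x) \<partial>lborel) p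
       \<le> enn_powr (enn_powr (ennreal (1 / \<bar>y\<bar>) * K) a * enn_powr (\<Phi> y) (1 - a)) p"
      using p le by (intro enn_powr_mono) auto
    also have "\<dots> = enn_powr (ennreal (1 / \<bar>y\<bar>) * K) (a * p) * enn_powr (\<Phi> y) ((1 - a) * p)"
      using p a by (simp add: enn_powr_mult enn_powr_powr)
    also have "a * p = p - 1" using p by (auto simp: a_def field_simps)
    also have "(1 - a) * p = 1" using p by (auto simp: a_def field_simps)
    also have "enn_powr (ennreal (1 / \<bar>y\<bar>) * K) (p - 1) = ennreal ((1 / \<bar>y\<bar>) powr (p - 1)) * enn_powr K (p - 1)"
      using p by (simp add: enn_powr_mult enn_powr_ennreal)
    finally show ?thesis by simp
  qed
  have "(\<integral>\<^sup>+y. ennreal (\<bar>y\<bar> powr (p * \<sigma> - 1)) * enn_powr (\<integral>\<^sup>+x. ennreal (H (x * y) * f x) \<partial>lborel) p \<partial>lborel)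
      \<le> (\<integral>\<^sup>+y. enn_powr K (p - 1) * (ennreal (\<bar>y\<bar> powr (\<sigma> - 1 - e)) * \<Phi> y) \<partial>lborel)"
  proof (rule nn_integral_mono_AE)
    show "AE y in lborel. ennreal (\<bar>y\<bar> powr (p * \<sigma> - 1)) * enn_powr (\<integral>\<^sup>+x. ennreal (H (x * y) * f x) \<partial>lborel) p
        \<le> enn_powr K (p - 1) * (ennreal (\<bar>y\<bar> powr (\<sigma> - 1 - e)) * \<Phi> y)"
      using AE_lborel_singleton[of 0]
    proof (rule AE_mp, intro AE_I2 impI)
      fix y :: real assume y: "y \<noteq> 0"
      have "ennreal (\<bar>y\<bar> powr (p * \<sigma> - 1)) * enn_powr (\<integral>\<^sup>+x. ennreal (H (x * y) * f x) \<partial>lborel) p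
          \<le> ennreal (\<bar>y\<bar> powr (p * \<sigma> - 1)) * (ennreal ((1 / \<bar>y\<bar>) powr (p - 1)) * enn_powr K (p - 1) * \<Phi> y)"
        by (rule mult_left_mono[OF pt[OF y]]) simp
      also have "\<dots> = enn_powr K (p - 1) * (ennreal (\<bar>y\<bar> powr (p * \<sigma> - 1) * (1 / \<bar>y\<bar>) powr (p - 1)) * \<Phi> y)"
        by (simp add: ennreal_mult mult_ac)
      also have "\<bar>y\<bar> powr (p * \<sigma> - 1) * (1 / \<bar>y\<bar>) powr (p - 1) = \<bar>y\<bar> powr (\<sigma> - 1 - e)"
      proof -
        have "(1 / \<bar>y\<bar>) powr (p - 1) = \<bar>y\<bar> powr (- (p - 1))"
          by (subst powr_divide) (simp_all only: powr_one_eq_one powr_minus_divide abs_ge_zero zero_le_one)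
        moreover have "\<bar>y\<bar> powr (p * \<sigma> - 1) * \<bar>y\<bar> powr (- (p - 1)) = \<bar>y\<bar> powr (p * \<sigma> - 1 + - (p - 1))"
          by (rule powr_add[symmetric])
        moreover have "p * \<sigma> - 1 + - (p - 1) = \<sigma> - 1 - e" by (simp add: e_def algebra_simps)
        ultimately show ?thesis by simp
      qed
      finally show "ennreal (\<bar>y\<bar> powr (p * \<sigma> - 1)) * enn_powr (\<integral>\<^sup>+x. ennreal (H (x * y) * f x) \<partial>lborel) p
        \<le> enn_powr K (p - 1) * (ennreal (\<bar>y\<bar> powr (\<sigma> - 1 - e)) * \<Phi> y)" .
    qed
  qed
  also have "\<dots> = enn_powr K (p - 1) * (\<integral>\<^sup>+y. ennreal (\<bar>y\<bar> powr (\<sigma> - 1 - e)) * \<Phi> y \<partial>lborel)"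
    unfolding \<Phi>_def by (rule nn_integral_cmult) measurable
  also have "(\<integral>\<^sup>+y. ennreal (\<bar>y\<bar> powr (\<sigma> - 1 - e)) * \<Phi> y \<partial>lborel)
     = (\<integral>\<^sup>+y. (\<integral>\<^sup>+x. ennreal (\<bar>y\<bar> powr (\<sigma> - 1 - e) * (H (x * y) * f x powr p * \<bar>x * y\<bar> powr e)) \<partial>lborel) \<partial>lborel)"
    unfolding \<Phi>_def
  proof (intro nn_integral_cong)
    fix y :: real
    have "ennreal (\<bar>y\<bar> powr (\<sigma> - 1 - e)) * (\<integral>\<^sup>+x. ennreal (H (x * y) * f x powr p * \<bar>x * y\<bar> powr e) \<partial>lborel)
        = (\<integral>\<^sup>+x. ennreal (\<bar>y\<bar> powr (\<sigma> - 1 - e)) * ennreal (H (x * y) * f x powr p * \<bar>x * y\<bar> powr e) \<partial>lborel)"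
      by (rule nn_integral_cmult[symmetric]) measurable
    also have "\<dots> = (\<integral>\<^sup>+x. ennreal (\<bar>y\<bar> powr (\<sigma> - 1 - e) * (H (x * y) * f x powr p * \<bar>x * y\<bar> powr e)) \<partial>lborel)"
      by (intro nn_integral_cong ennreal_mult[symmetric]) (auto intro!: mult_nonneg_nonneg H)
    finally show "ennreal (\<bar>y\<bar> powr (\<sigma> - 1 - e)) * (\<integral>\<^sup>+x. ennreal (H (x * y) * f x powr p * \<bar>x * y\<bar> powr e) \<partial>lborel)
        = (\<integral>\<^sup>+x. ennreal (\<bar>y\<bar> powr (\<sigma> - 1 - e) * (H (x * y) * f x powr p * \<bar>x * y\<bar> powr e)) \<partial>lborel)" .
  qed
  also have "\<dots> = K * (\<integral>\<^sup>+x. ennreal (\<bar>x\<bar> powr (e - \<sigma>) * f x powr p) \<partial>lborel)"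
    unfolding K_def by (rule double_int[OF _ H _ f]) measurable
  also have "e - \<sigma> = p * (1 - \<sigma>) - 1" by (simp add: e_def algebra_simps)
  also have "enn_powr K (p - 1) * (K * (\<integral>\<^sup>+x. ennreal (\<bar>x\<bar> powr (p * (1 - \<sigma>) - 1) * f x powr p) \<partial>lborel))
     = (enn_powr K (p - 1) * enn_powr K 1) * (\<integral>\<^sup>+x. ennreal (\<bar>x\<bar> powr (p * (1 - \<sigma>) - 1) * f x powr p) \<partial>lborel)"
    by (simp add: mult.assoc)
  also have "enn_powr K (p - 1) * enn_powr K 1 = enn_powr K p"
    using p by (subst enn_powr_add) auto
  finally show ?thesis unfolding K_def .
qed



lemma core_lt_raw:
  fixes H f :: "real \<Rightarrow> real"
  assumes [measurable]: "H \<in> borel_measurable borel" and H: "\<And>t. H t \<ge> 0"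
    and [measurable]: "f \<in> borel_measurable borel" and f: "\<And>x. f x \<ge> 0" and p: "0 < p" "p < 1"
  shows "Kfun H \<sigma> * (\<integral>\<^sup>+x. ennreal (\<bar>x\<bar> powr (p * (1 - \<sigma>) - 1) * f x powr p) \<partial>lborel)
     \<le> enn_powr (Kfun H \<sigma>) (1 - p) * (\<integral>\<^sup>+y. ennreal (\<bar>y\<bar> powr (p * \<sigma> - 1)) * enn_powr (\<integral>\<^sup>+x. ennreal (H (x * y) * f x) \<partial>lborel) p \<partial>lborel)"
proof -
  define e where "e = (\<sigma> - 1) * (1 - p)"
  define K where "K = Kfun H \<sigma>"
  define \<Phi> where "\<Phi> y = (\<integral>\<^sup>+x. ennreal (H (x * y) * f x powr p * \<bar>x * y\<bar> powr e) \<partial>lborel)" for y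
  define g where "g y = (\<integral>\<^sup>+x. ennreal (H (x * y) * f x) \<partial>lborel)" for y
  have pt: "\<Phi> y \<le> enn_powr (g y) p * (ennreal ((1 / \<bar>y\<bar>) powr (1 - p)) * enn_powr K (1 - p))" if y: "y \<noteq> 0" for y
  proof -
    have "\<Phi> y = (\<integral>\<^sup>+x. ennreal ((H (x * y) * f x) powr p * (H (x * y) * \<bar>x * y\<bar> powr (\<sigma> - 1)) powr (1 - p)) \<partial>lborel)"
      unfolding \<Phi>_def e_def
      by (intro nn_integral_cong) (simp add: pw_lt[OF H f abs_ge_zero p])
    also have "\<dots> \<le> enn_powr (g y) p * enn_powr (\<integral>\<^sup>+x. ennreal (H (x * y) * \<bar>x * y\<bar> powr (\<sigma> - 1)) \<partial>lborel) (1 - p)"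
      unfolding g_def
      by (rule holder_interp[OF _ _ _ _ p]) (auto intro!: mult_nonneg_nonneg H f)
    also have "(\<integral>\<^sup>+x. ennreal (H (x * y) * \<bar>x * y\<bar> powr (\<sigma> - 1)) \<partial>lborel) = ennreal (1 / \<bar>y\<bar>) * K"
      unfolding K_def Kfun_def
      by (rule nn_integral_scale[OF _ y, where h="\<lambda>t. ennreal (H t * \<bar>t\<bar> powr (\<sigma> - 1))"]) measurable
    also have "enn_powr (ennreal (1 / \<bar>y\<bar>) * K) (1 - p) = ennreal ((1 / \<bar>y\<bar>) powr (1 - p)) * enn_powr K (1 - p)"
      using p by (simp add: enn_powr_mult enn_powr_ennreal)
    finally show ?thesis .
  qed
  have "K * (\<integral>\<^sup>+x. ennreal (\<bar>x\<bar> powr (p * (1 - \<sigma>) - 1) * f x powr p) \<partial>lborel)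
     = (\<integral>\<^sup>+y. (\<integral>\<^sup>+x. ennreal (\<bar>y\<bar> powr (\<sigma> - 1 - e) * (H (x * y) * f x powr p * \<bar>x * y\<bar> powr e)) \<partial>lborel) \<partial>lborel)"
  proof -
    have "e - \<sigma> = p * (1 - \<sigma>) - 1" by (simp add: e_def algebra_simps)
    then show ?thesis unfolding K_def using double_int[OF assms(1) H assms(3) f, where \<sigma>=\<sigma> and e=e and p=p] by simp
  qed
  also have "\<dots> = (\<integral>\<^sup>+y. ennreal (\<bar>y\<bar> powr (\<sigma> - 1 - e)) * \<Phi> y \<partial>lborel)"
    unfolding \<Phi>_def
  proof (intro nn_integral_cong)
    fix y :: real
    have "ennreal (\<bar>y\<bar> powr (\<sigma> - 1 - e)) * (\<integral>\<^sup>+x. ennreal (H (x * y) * f x powr p * \<bar>x * y\<bar> powr e) \<partial>lborel)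
        = (\<integral>\<^sup>+x. ennreal (\<bar>y\<bar> powr (\<sigma> - 1 - e)) * ennreal (H (x * y) * f x powr p * \<bar>x * y\<bar> powr e) \<partial>lborel)"
      by (rule nn_integral_cmult[symmetric]) measurable
    also have "\<dots> = (\<integral>\<^sup>+x. ennreal (\<bar>y\<bar> powr (\<sigma> - 1 - e) * (H (x * y) * f x powr p * \<bar>x * y\<bar> powr e)) \<partial>lborel)"
      by (intro nn_integral_cong ennreal_mult[symmetric]) (auto intro!: mult_nonneg_nonneg H)
    finally show "(\<integral>\<^sup>+x. ennreal (\<bar>y\<bar> powr (\<sigma> - 1 - e) * (H (x * y) * f x powr p * \<bar>x * y\<bar> powr e)) \<partial>lborel)
      = ennreal (\<bar>y\<bar> powr (\<sigma> - 1 - e)) * (\<integral>\<^sup>+x. ennreal (H (x * y) * f x powr p * \<bar>x * y\<bar> powr e) \<partial>lborel)" by simp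
  qed
  also have "\<dots> \<le> (\<integral>\<^sup>+y. enn_powr K (1 - p) * (ennreal (\<bar>y\<bar> powr (p * \<sigma> - 1)) * enn_powr (g y) p) \<partial>lborel)"
  proof (rule nn_integral_mono_AE)
    show "AE y in lborel. ennreal (\<bar>y\<bar> powr (\<sigma> - 1 - e)) * \<Phi> y
        \<le> enn_powr K (1 - p) * (ennreal (\<bar>y\<bar> powr (p * \<sigma> - 1)) * enn_powr (g y) p)"
      using AE_lborel_singleton[of 0]
    proof (rule AE_mp, intro AE_I2 impI)
      fix y :: real assume y: "y \<noteq> 0"
      have "ennreal (\<bar>y\<bar> powr (\<sigma> - 1 - e)) * \<Phi> y
          \<le> ennreal (\<bar>y\<bar> powr (\<sigma> - 1 - e)) * (enn_powr (g y) p * (ennreal ((1 / \<bar>y\<bar>) powr (1 - p)) * enn_powr K (1 - p)))"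
        by (rule mult_left_mono[OF pt[OF y]]) simp
      also have "\<dots> = enn_powr K (1 - p) * (ennreal (\<bar>y\<bar> powr (\<sigma> - 1 - e) * (1 / \<bar>y\<bar>) powr (1 - p)) * enn_powr (g y) p)"
        by (simp add: ennreal_mult mult_ac)
      also have "\<bar>y\<bar> powr (\<sigma> - 1 - e) * (1 / \<bar>y\<bar>) powr (1 - p) = \<bar>y\<bar> powr (p * \<sigma> - 1)"
      proof -
        have "(1 / \<bar>y\<bar>) powr (1 - p) = \<bar>y\<bar> powr (- (1 - p))"
          by (subst powr_divide) (simp_all only: powr_one_eq_one powr_minus_divide abs_ge_zero zero_le_one)
        moreover have "\<bar>y\<bar> powr (\<sigma> - 1 - e) * \<bar>y\<bar> powr (- (1 - p)) = \<bar>y\<bar> powr (\<sigma> - 1 - e + - (1 - p))"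
          by (rule powr_add[symmetric])
        moreover have "\<sigma> - 1 - e + - (1 - p) = p * \<sigma> - 1" by (simp add: e_def algebra_simps)
        ultimately show ?thesis by simp
      qed
      finally show "ennreal (\<bar>y\<bar> powr (\<sigma> - 1 - e)) * \<Phi> y
        \<le> enn_powr K (1 - p) * (ennreal (\<bar>y\<bar> powr (p * \<sigma> - 1)) * enn_powr (g y) p)" .
    qed
  qed
  also have "\<dots> = enn_powr K (1 - p) * (\<integral>\<^sup>+y. ennreal (\<bar>y\<bar> powr (p * \<sigma> - 1)) * enn_powr (g y) p \<partial>lborel)"
    unfolding g_def by (rule nn_integral_cmult) measurable
  finally show ?thesis unfolding K_def g_def .
qed



definition J1 :: "(real \<Rightarrow> real) \<Rightarrow> (real \<Rightarrow> real) \<Rightarrow> real \<Rightarrow> real \<Rightarrow> ennreal" where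
  "J1 H f p \<sigma> = (\<integral>\<^sup>+y. ennreal (\<bar>y\<bar> powr (p * \<sigma> - 1)) * enn_powr (\<integral>\<^sup>+x. ennreal (H (x * y) * f x) \<partial>lborel) p \<partial>lborel)"

definition I1 :: "(real \<Rightarrow> real) \<Rightarrow> real \<Rightarrow> real \<Rightarrow> ennreal" where
  "I1 f p \<sigma> = (\<integral>\<^sup>+x. ennreal (\<bar>x\<bar> powr (p * (1 - \<sigma>) - 1) * f x powr p) \<partial>lborel)"

lemma core_lt_fin:
  fixes H f :: "real \<Rightarrow> real"
  assumes [measurable]: "H \<in> borel_measurable borel" and H: "\<And>t. H t \<ge> 0"
    and [measurable]: "f \<in> borel_measurable borel" and f: "\<And>x. f x \<ge> 0" and p: "0 < p" "p < 1"
    and fin: "Kfun H \<sigma> < top"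
  shows "enn_powr (Kfun H \<sigma>) p * I1 f p \<sigma> \<le> J1 H f p \<sigma>"
proof (cases "Kfun H \<sigma> = 0")
  case True then show ?thesis by simp
next
  case False
  with fin obtain k where k: "Kfun H \<sigma> = ennreal k" "k > 0"
    by (cases "Kfun H \<sigma>") (auto simp: zero_less_iff_neq_zero)
  have raw: "ennreal k * I1 f p \<sigma> \<le> ennreal (k powr (1 - p)) * J1 H f p \<sigma>"
    using core_lt_raw[OF assms(1) H assms(3) f p, of \<sigma>] k p
    unfolding I1_def J1_def by (simp add: enn_powr_ennreal)
  have "ennreal (k powr (p - 1)) * (ennreal k * I1 f p \<sigma>) \<le> ennreal (k powr (p - 1)) * (ennreal (k powr (1 - p)) * J1 H f p \<sigma>)"
    by (rule mult_left_mono[OF raw]) simp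
  also have "ennreal (k powr (p - 1)) * (ennreal (k powr (1 - p)) * J1 H f p \<sigma>) = ennreal (k powr (p - 1) * k powr (1 - p)) * J1 H f p \<sigma>"
    by (simp add: ennreal_mult mult.assoc)
  also have "k powr (p - 1) * k powr (1 - p) = 1"
    using k by (simp add: powr_add[symmetric])
  also have "ennreal (k powr (p - 1)) * (ennreal k * I1 f p \<sigma>) = ennreal (k powr (p - 1) * k powr 1) * I1 f p \<sigma>"
    using k by (simp add: ennreal_mult mult.assoc)
  also have "k powr (p - 1) * k powr 1 = k powr (p - 1 + 1)"
    by (rule powr_add[symmetric])
  also have "p - 1 + 1 = p" by simp
  finally show ?thesis using k p by (simp add: enn_powr_ennreal)
qed



lemma ennreal_unbounded:
  fixes c J :: ennreal
  assumes c: "c > 0" and le: "\<And>N. N > 0 \<Longrightarrow> ennreal N * c \<le> J"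
  shows "J = top"
proof (rule ccontr)
  assume "J \<noteq> top"
  then obtain j where j: "J = ennreal j" "j \<ge> 0" by (cases J) auto
  show False
  proof (cases "c = top")
    case True
    then have "ennreal 1 * c = top" by simp
    with le[of 1] j show False by (simp add: top_unique)
  next
    case False
    with c obtain \<gamma> where g: "c = ennreal \<gamma>" "\<gamma> > 0" by (cases c) auto
    have "ennreal ((j + 1) / \<gamma>) * c = ennreal (j + 1)"
      using g j by (simp add: ennreal_mult[symmetric])
    with le[of "(j + 1) / \<gamma>"] g j show False by simp
  qed
qed

lemma J1_mono:
  fixes H H' f :: "real \<Rightarrow> real"
  assumes le: "\<And>t. H' t \<le> H t" and H': "\<And>t. H' t \<ge> 0" and f: "\<And>x. f x \<ge> 0" and p: "p > 0"
  shows "J1 H' f p \<sigma> \<le> J1 H f p \<sigma>"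
  unfolding J1_def
proof (intro nn_integral_mono mult_left_mono enn_powr_mono[OF p])
  fix y x :: real
  show "ennreal (H' (x * y) * f x) \<le> ennreal (H (x * y) * f x)"
    using le[of "x * y"] f[of x] by (intro ennreal_leI mult_right_mono) auto
qed auto

definition trunc :: "(real \<Rightarrow> real) \<Rightarrow> real \<Rightarrow> nat \<Rightarrow> real \<Rightarrow> real" where
  "trunc H \<sigma> n t = H t * indicator {t. H t * \<bar>t\<bar> powr (\<sigma> - 1) \<le> real n \<and> \<bar>t\<bar> \<le> real n} t"

lemma trunc_measurable[measurable]:
  assumes [measurable]: "H \<in> borel_measurable borel"
  shows "trunc H \<sigma> n \<in> borel_measurable borel"
proof -
  have [measurable]: "{t. H t * \<bar>t\<bar> powr (\<sigma> - 1) \<le> real n \<and> \<bar>t\<bar> \<le> real n} \<in> sets borel"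
    by measurable
  show ?thesis unfolding trunc_def by measurable
qed

lemma trunc_nonneg: "(\<And>t. H t \<ge> 0) \<Longrightarrow> trunc H \<sigma> n t \<ge> 0"
  by (simp add: trunc_def)

lemma trunc_le: "(\<And>t. H t \<ge> 0) \<Longrightarrow> trunc H \<sigma> n t \<le> H t"
  by (simp add: trunc_def indicator_def)

lemma trunc_fin:
  assumes [measurable]: "H \<in> borel_measurable borel" and H: "\<And>t. H t \<ge> 0"
  shows "Kfun (trunc H \<sigma> n) \<sigma> < top"
proof -
  have "Kfun (trunc H \<sigma> n) \<sigma> \<le> (\<integral>\<^sup>+t. ennreal (real n) * indicator {- real n .. real n} t \<partial>lborel)"
    unfolding Kfun_def
  proof (intro nn_integral_mono)
    fix t :: real
    show "ennreal (trunc H \<sigma> n t * \<bar>t\<bar> powr (\<sigma> - 1)) \<le> ennreal (real n) * indicator {- real n .. real n} t"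
      by (auto simp: trunc_def indicator_def)
  qed
  also have "\<dots> = ennreal (real n) * ennreal (2 * real n)"
    by (subst nn_integral_cmult_indicator) auto
  also have "\<dots> < top" by (simp add: ennreal_mult_less_top)
  finally show ?thesis .
qed

lemma trunc_SUP:
  assumes [measurable]: "H \<in> borel_measurable borel" and H: "\<And>t. H t \<ge> 0"
  shows "(SUP n. Kfun (trunc H \<sigma> n) \<sigma>) = Kfun H \<sigma>"
proof -
  have inc: "incseq (\<lambda>n t. ennreal (trunc H \<sigma> n t * \<bar>t\<bar> powr (\<sigma> - 1)))"
  proof (intro incseq_SucI le_funI ennreal_leI)
    fix n :: nat and t :: real
    show "trunc H \<sigma> n t * \<bar>t\<bar> powr (\<sigma> - 1) \<le> trunc H \<sigma> (Suc n) t * \<bar>t\<bar> powr (\<sigma> - 1)"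
      using H[of t] by (auto simp: trunc_def indicator_def)
  qed
  have pw: "(SUP n. ennreal (trunc H \<sigma> n t * \<bar>t\<bar> powr (\<sigma> - 1))) = ennreal (H t * \<bar>t\<bar> powr (\<sigma> - 1))" for t
  proof (rule antisym)
    show "(SUP n. ennreal (trunc H \<sigma> n t * \<bar>t\<bar> powr (\<sigma> - 1))) \<le> ennreal (H t * \<bar>t\<bar> powr (\<sigma> - 1))"
      using H[of t] by (intro SUP_least ennreal_leI) (auto simp: trunc_def indicator_def)
  next
    obtain n :: nat where n: "max (H t * \<bar>t\<bar> powr (\<sigma> - 1)) \<bar>t\<bar> \<le> real n"
      using real_arch_simple by blast
    then have "trunc H \<sigma> n t = H t" by (simp add: trunc_def)
    then show "ennreal (H t * \<bar>t\<bar> powr (\<sigma> - 1)) \<le> (SUP n. ennreal (trunc H \<sigma> n t * \<bar>t\<bar> powr (\<sigma> - 1)))"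
      by (intro SUP_upper2[of n]) auto
  qed
  have "(SUP n. Kfun (trunc H \<sigma> n) \<sigma>) = (\<integral>\<^sup>+t. (SUP n. ennreal (trunc H \<sigma> n t * \<bar>t\<bar> powr (\<sigma> - 1))) \<partial>lborel)"
    unfolding Kfun_def by (rule nn_integral_monotone_convergence_SUP[OF inc, symmetric]) measurable
  also have "\<dots> = Kfun H \<sigma>" unfolding Kfun_def pw ..
  finally show ?thesis .
qed

lemma core_lt:
  fixes H f :: "real \<Rightarrow> real"
  assumes [measurable]: "H \<in> borel_measurable borel" and H: "\<And>t. H t \<ge> 0"
    and [measurable]: "f \<in> borel_measurable borel" and f: "\<And>x. f x \<ge> 0" and p: "0 < p" "p < 1"
  shows "enn_powr (Kfun H \<sigma>) p * I1 f p \<sigma> \<le> J1 H f p \<sigma>"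
proof (cases "Kfun H \<sigma> < top")
  case True then show ?thesis by (rule core_lt_fin[OF assms])
next
  case False
  then have Ktop: "Kfun H \<sigma> = top" by (metis less_top)
  show ?thesis
  proof (cases "I1 f p \<sigma> = 0")
    case True then show ?thesis by simp
  next
    case False
    then have Ipos: "I1 f p \<sigma> > 0" by (simp add: zero_less_iff_neq_zero)
    have "J1 H f p \<sigma> = top"
    proof (rule ennreal_unbounded[OF Ipos])
      fix N :: real assume N: "N > 0"
      define M where "M = N powr (1 / p)"
      have M: "M > 0" "M powr p = N" using N p by (auto simp: M_def powr_powr)
      have "ennreal M < (SUP n. Kfun (trunc H \<sigma> n) \<sigma>)"
        unfolding trunc_SUP[OF assms(1) H] Ktop by simp
      then obtain n where n: "ennreal M < Kfun (trunc H \<sigma> n) \<sigma>"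
        by (auto simp: less_SUP_iff)
      obtain k where k: "Kfun (trunc H \<sigma> n) \<sigma> = ennreal k" "k \<ge> 0"
        using trunc_fin[OF assms(1) H, of \<sigma> n] by (cases "Kfun (trunc H \<sigma> n) \<sigma>") auto
      have "M \<le> k" using n k M by (simp add: ennreal_less_iff)
      then have "N \<le> k powr p" using M p by (metis powr_mono2 less_imp_le)
      have "ennreal N * I1 f p \<sigma> \<le> enn_powr (Kfun (trunc H \<sigma> n) \<sigma>) p * I1 f p \<sigma>"
        using \<open>N \<le> k powr p\<close> k by (intro mult_right_mono) (auto simp: enn_powr_ennreal ennreal_leI)
      also have "\<dots> \<le> J1 (trunc H \<sigma> n) f p \<sigma>"
        by (rule core_lt_fin[OF _ trunc_nonneg[OF H] assms(3) f p trunc_fin[OF assms(1) H]]) measurable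
      also have "\<dots> \<le> J1 H f p \<sigma>"
        by (rule J1_mono[OF trunc_le[OF H] trunc_nonneg[OF H] f p(1)])
      finally show "ennreal N * I1 f p \<sigma> \<le> J1 H f p \<sigma>" .
    qed
    then show ?thesis by simp
  qed
qed



lemma nn_integral_reflect:
  fixes F :: "real \<Rightarrow> ennreal"
  assumes [measurable]: "F \<in> borel_measurable borel"
  shows "(\<integral>\<^sup>+x. F x \<partial>lborel) = (\<integral>\<^sup>+x. F (- x) \<partial>lborel)"
  using nn_integral_real_affine[OF assms, of "-1" 0] by simp

lemma inv_interval:
  fixes h :: "real \<Rightarrow> real" and n :: nat
  assumes [measurable]: "h \<in> borel_measurable borel" and h: "\<And>x. h x \<ge> 0"
  shows "(\<integral>\<^sup>+x. ennreal (h x) * indicator {1 / real (Suc n) .. real (Suc n)} x \<partial>lborel)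
       = (\<integral>\<^sup>+u. ennreal (h (1 / u) / u^2) * indicator {1 / real (Suc n) .. real (Suc n)} u \<partial>lborel)"
proof -
  define a where "a = 1 / real (Suc n)"
  define b where "b = real (Suc n)"
  have ab: "0 < a" "a \<le> b" unfolding a_def b_def by (auto simp: field_simps)
  have sub: "(\<integral>\<^sup>+x. (h (- x)) * indicator {(\<lambda>u. - 1 / u) a .. (\<lambda>u. - 1 / u) b} x \<partial>lborel)
      = (\<integral>\<^sup>+u. (h (- ((\<lambda>u. - 1 / u) u))) * (\<lambda>u. 1 / u^2) u * indicator {a..b} u \<partial>lborel)"
  proof (rule nn_integral_substitution)
    show "set_borel_measurable borel {(\<lambda>u. - 1 / u) a .. (\<lambda>u. - 1 / u) b} (\<lambda>x. h (- x))"
      unfolding set_borel_measurable_def by measurable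
    show "((\<lambda>u. - 1 / u) has_real_derivative 1 / x^2) (at x)" if "x \<in> {a..b}" for x
      using that ab by (auto intro!: derivative_eq_intros simp: power2_eq_square field_simps)
    show "continuous_on {a..b} (\<lambda>u. 1 / u^2)"
      using ab by (intro continuous_intros) auto
  qed (use ab in auto)
  have L: "(\<integral>\<^sup>+x. (h (- x)) * indicator {(\<lambda>u. - 1 / u) a .. (\<lambda>u. - 1 / u) b} x \<partial>lborel)
      = (\<integral>\<^sup>+x. ennreal (h x) * indicator {1 / real (Suc n) .. real (Suc n)} x \<partial>lborel)"
  proof -
    have "(\<integral>\<^sup>+x. ennreal (h x) * indicator {1 / real (Suc n) .. real (Suc n)} x \<partial>lborel)
        = (\<integral>\<^sup>+x. ennreal (h (- x)) * indicator {1 / real (Suc n) .. real (Suc n)} (- x) \<partial>lborel)"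
      by (rule nn_integral_reflect) measurable
    also have "\<dots> = (\<integral>\<^sup>+x. (h (- x)) * indicator {(\<lambda>u. - 1 / u) a .. (\<lambda>u. - 1 / u) b} x \<partial>lborel)"
      by (intro nn_integral_cong) (auto simp: a_def b_def indicator_def)
    finally show ?thesis by simp
  qed
  have R: "(\<integral>\<^sup>+u. (h (- ((\<lambda>u. - 1 / u) u))) * (\<lambda>u. 1 / u^2) u * indicator {a..b} u \<partial>lborel)
      = (\<integral>\<^sup>+u. ennreal (h (1 / u) / u^2) * indicator {1 / real (Suc n) .. real (Suc n)} u \<partial>lborel)"
    by (intro nn_integral_cong) (auto simp: a_def b_def indicator_def)
  show ?thesis using sub L R by simp
qed



lemma interval_exhaust:
  fixes x :: real assumes "x > 0"
  obtains n :: nat where "x \<in> {1 / real (Suc n) .. real (Suc n)}"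
proof -
  obtain n1 :: nat where n1: "1 / x \<le> real n1" using real_arch_simple by blast
  obtain n2 :: nat where n2: "x \<le> real n2" using real_arch_simple by blast
  define n where "n = max n1 n2"
  have "1 / x \<le> real (Suc n)" using n1 by (simp add: n_def)
  then have "1 / real (Suc n) \<le> x" using assms by (simp add: field_simps)
  moreover have "x \<le> real (Suc n)" using n2 by (simp add: n_def)
  ultimately show ?thesis using that by auto
qed

lemma sup_interval:
  fixes F :: "real \<Rightarrow> ennreal"
  assumes [measurable]: "F \<in> borel_measurable borel"
  shows "(SUP n. \<integral>\<^sup>+x. F x * indicator {1 / real (Suc n) .. real (Suc n)} x \<partial>lborel)
       = (\<integral>\<^sup>+x. F x * indicator {0<..} x \<partial>lborel)"
proof -
  have inc: "incseq (\<lambda>n x. F x * indicator {1 / real (Suc n) .. real (Suc n)} x)"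
  proof (intro incseq_SucI le_funI)
    fix n :: nat and x :: real
    have "{1 / real (Suc n) .. real (Suc n)} \<subseteq> {1 / real (Suc (Suc n)) .. real (Suc (Suc n))}"
      by (auto simp: field_simps intro: order_trans[rotated])
    then show "F x * indicator {1 / real (Suc n) .. real (Suc n)} x \<le> F x * indicator {1 / real (Suc (Suc n)) .. real (Suc (Suc n))} x"
      by (intro mult_left_mono) (auto simp: indicator_def)
  qed
  have pw: "(SUP n. F x * indicator {1 / real (Suc n) .. real (Suc n)} x) = F x * indicator {0<..} x" for x
  proof (cases "x > 0")
    case True
    then obtain N where N: "x \<in> {1 / real (Suc N) .. real (Suc N)}" by (rule interval_exhaust)
    show ?thesis
    proof (rule antisym)
      show "(SUP n. F x * indicator {1 / real (Suc n) .. real (Suc n)} x) \<le> F x * indicator {0<..} x"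
        using True by (intro SUP_least) (auto simp: indicator_def)
      show "F x * indicator {0<..} x \<le> (SUP n. F x * indicator {1 / real (Suc n) .. real (Suc n)} x)"
        using True N by (intro SUP_upper2[of N]) (auto simp: indicator_def)
    qed
  next
    case False
    have "x \<notin> {1 / real (Suc n) .. real (Suc n)}" for n
    proof -
      have pos: "0 < 1 / real (Suc n)" by simp
      show ?thesis
      proof
        assume "x \<in> {1 / real (Suc n) .. real (Suc n)}"
        then have "1 / real (Suc n) \<le> x" by (simp only: atLeastAtMost_iff)
        with pos False show False by linarith
      qed
    qed
    then show ?thesis using False by (simp add: indicator_def)
  qed
  show ?thesis
    unfolding pw[symmetric]
    by (rule nn_integral_monotone_convergence_SUP[OF inc, symmetric]) measurable
qed

lemma inv_pos:
  fixes h :: "real \<Rightarrow> real"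
  assumes [measurable]: "h \<in> borel_measurable borel" and h: "\<And>x. h x \<ge> 0"
  shows "(\<integral>\<^sup>+x. ennreal (h x) * indicator {0<..} x \<partial>lborel)
       = (\<integral>\<^sup>+u. ennreal (h (1 / u) / u^2) * indicator {0<..} u \<partial>lborel)"
  using inv_interval[OF assms] sup_interval[of "\<lambda>x. ennreal (h x)"] sup_interval[of "\<lambda>u. ennreal (h (1 / u) / u^2)"]
  by simp

lemma split_halves:
  fixes F :: "real \<Rightarrow> ennreal"
  assumes [measurable]: "F \<in> borel_measurable borel"
  shows "(\<integral>\<^sup>+x. F x \<partial>lborel) = (\<integral>\<^sup>+x. F x * indicator {0<..} x \<partial>lborel) + (\<integral>\<^sup>+x. F (- x) * indicator {0<..} x \<partial>lborel)"
proof -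
  have "(\<integral>\<^sup>+x. F x \<partial>lborel) = (\<integral>\<^sup>+x. F x * indicator {0<..} x + F x * indicator {..<0} x \<partial>lborel)"
  proof (rule nn_integral_cong_AE)
    show "AE x in lborel. F x = F x * indicator {0<..} x + F x * indicator {..<0} x"
      using AE_lborel_singleton[of 0] by (rule AE_mp) (auto simp: indicator_def)
  qed
  also have "\<dots> = (\<integral>\<^sup>+x. F x * indicator {0<..} x \<partial>lborel) + (\<integral>\<^sup>+x. F x * indicator {..<0} x \<partial>lborel)"
    by (rule nn_integral_add) measurable
  also have "(\<integral>\<^sup>+x. F x * indicator {..<0} x \<partial>lborel) = (\<integral>\<^sup>+x. F (- x) * indicator {..<0} (- x) \<partial>lborel)"
    by (rule nn_integral_reflect) measurable
  also have "\<dots> = (\<integral>\<^sup>+x. F (- x) * indicator {0<..} x \<partial>lborel)"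
    by (intro nn_integral_cong) (auto simp: indicator_def)
  finally show ?thesis .
qed

lemma nn_integral_inversion:
  fixes h :: "real \<Rightarrow> real"
  assumes [measurable]: "h \<in> borel_measurable borel" and h: "\<And>x. h x \<ge> 0"
  shows "(\<integral>\<^sup>+x. ennreal (h x) \<partial>lborel) = (\<integral>\<^sup>+u. ennreal (h (1 / u) / u^2) \<partial>lborel)"
proof -
  have a: "(\<integral>\<^sup>+x. ennreal (h (- x)) * indicator {0<..} x \<partial>lborel)
       = (\<integral>\<^sup>+u. ennreal (h (- (1 / u)) / u^2) * indicator {0<..} u \<partial>lborel)"
    using inv_pos[of "\<lambda>x. h (- x)"] h by simp
  have b: "(\<integral>\<^sup>+u. ennreal (h (1 / (- u)) / (- u)^2) * indicator {0<..} u \<partial>lborel)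
       = (\<integral>\<^sup>+u. ennreal (h (- (1 / u)) / u^2) * indicator {0<..} u \<partial>lborel)"
    by simp
  have s1: "(\<integral>\<^sup>+x. ennreal (h x) \<partial>lborel) = (\<integral>\<^sup>+x. ennreal (h x) * indicator {0<..} x \<partial>lborel)
      + (\<integral>\<^sup>+x. ennreal (h (- x)) * indicator {0<..} x \<partial>lborel)"
    by (rule split_halves) measurable
  have s2: "(\<integral>\<^sup>+u. ennreal (h (1 / u) / u^2) \<partial>lborel) = (\<integral>\<^sup>+u. ennreal (h (1 / u) / u^2) * indicator {0<..} u \<partial>lborel)
      + (\<integral>\<^sup>+u. ennreal (h (1 / (- u)) / (- u)^2) * indicator {0<..} u \<partial>lborel)"
    by (rule split_halves) measurable
  show ?thesis unfolding s1 s2 inv_pos[OF assms] a b ..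
qed



lemma powi_m1: "(x::real) powi (-1) = inverse x"
  by (simp add: power_int_minus)

lemma case_one:
  fixes p \<sigma> :: real and H f :: "real \<Rightarrow> real"
  assumes [measurable]: "H \<in> borel_measurable borel" and H: "\<And>t. H t \<ge> 0"
    and [measurable]: "f \<in> borel_measurable borel" and f: "\<And>x. f x \<ge> 0" and p: "p > 0"
  shows "(p > 1 \<longrightarrow> J1 H f p \<sigma> \<le> enn_powr (Kfun H \<sigma>) p * I1 f p \<sigma>)
       \<and> (p < 1 \<longrightarrow> J1 H f p \<sigma> \<ge> enn_powr (Kfun H \<sigma>) p * I1 f p \<sigma>)"
proof (intro conjI impI)
  assume "p > 1"
  then show "J1 H f p \<sigma> \<le> enn_powr (Kfun H \<sigma>) p * I1 f p \<sigma>"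
    using core_gt[OF assms(1) H assms(3) f] unfolding J1_def I1_def by blast
next
  assume "p < 1"
  then show "J1 H f p \<sigma> \<ge> enn_powr (Kfun H \<sigma>) p * I1 f p \<sigma>"
    using core_lt[OF assms(1) H assms(3) f p] by blast
qed

lemma J_one: "Jfun H f p \<sigma> 1 = J1 H f p \<sigma>"
  unfolding Jfun_def J1_def by simp

lemma I_one: "Ifun f p \<sigma> 1 = I1 f p \<sigma>"
  unfolding Ifun_def I1_def by simp

lemma J_minus:
  fixes H f :: "real \<Rightarrow> real"
  assumes [measurable]: "H \<in> borel_measurable borel" and H: "\<And>t. H t \<ge> 0"
    and [measurable]: "f \<in> borel_measurable borel" and f: "\<And>x. f x \<ge> 0"
  shows "Jfun H f p \<sigma> (-1) = J1 H (\<lambda>u. f (1 / u) / u^2) p \<sigma>"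
proof -
  have inner: "(\<integral>\<^sup>+x. ennreal (H (x powi (-1) * y) * f x) \<partial>lborel) = (\<integral>\<^sup>+u. ennreal (H (u * y) * (f (1 / u) / u^2)) \<partial>lborel)" for y
  proof -
    have "(\<integral>\<^sup>+x. ennreal (H (x powi (-1) * y) * f x) \<partial>lborel) = (\<integral>\<^sup>+x. ennreal (H (inverse x * y) * f x) \<partial>lborel)"
      by (simp add: powi_m1)
    also have "\<dots> = (\<integral>\<^sup>+u. ennreal (H (inverse (1 / u) * y) * f (1 / u) / u^2) \<partial>lborel)"
      by (rule nn_integral_inversion[where h="\<lambda>x. H (inverse x * y) * f x"]) (auto intro: mult_nonneg_nonneg H f)
    also have "\<dots> = (\<integral>\<^sup>+u. ennreal (H (u * y) * (f (1 / u) / u^2)) \<partial>lborel)"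
      by (intro nn_integral_cong) simp
    finally show ?thesis .
  qed
  show ?thesis unfolding Jfun_def J1_def inner ..
qed

lemma pw_inv:
  fixes u v p \<sigma> :: real
  assumes v: "v \<ge> 0"
  shows "\<bar>1 / u\<bar> powr (p * (1 + \<sigma>) - 1) * v powr p / u^2 = \<bar>u\<bar> powr (p * (1 - \<sigma>) - 1) * (v / u^2) powr p"
proof (cases "u = 0")
  case False
  define A where "A = \<bar>u\<bar>"
  have A: "A > 0" using False by (simp add: A_def)
  have u2: "u^2 = A powr 2" using A by (simp add: A_def powr_realpow)
  have ab: "\<bar>1 / u\<bar> = 1 / A" by (simp add: A_def)
  have e1: "\<bar>1 / u\<bar> powr (p * (1 + \<sigma>) - 1) = A powr (- (p * (1 + \<sigma>) - 1))"
    unfolding ab using A by (subst powr_divide) (simp_all only: powr_one_eq_one powr_minus_divide less_imp_le zero_le_one)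
  have e2: "1 / u^2 = A powr (-2)" unfolding u2 by (simp add: powr_minus_divide)
  have e3: "(v / u^2) powr p = v powr p * A powr (-2 * p)"
  proof -
    have "(v / u^2) powr p = v powr p / (A powr 2) powr p"
      unfolding u2 using v A by (simp add: powr_divide)
    also have "\<dots> = v powr p * A powr (- (2 * p))" by (simp add: powr_powr powr_minus_divide)
    finally show ?thesis by simp
  qed
  have L: "\<bar>1 / u\<bar> powr (p * (1 + \<sigma>) - 1) * v powr p / u^2
      = v powr p * (A powr (- (p * (1 + \<sigma>) - 1)) * A powr (-2))"
    unfolding e1 using e2 by (simp add: divide_inverse mult_ac flip: e2)
  also have "\<dots> = v powr p * A powr (- (p * (1 + \<sigma>) - 1) + -2)" by (simp only: powr_add)
  finally have L2: "\<bar>1 / u\<bar> powr (p * (1 + \<sigma>) - 1) * v powr p / u^2 = v powr p * A powr (- (p * (1 + \<sigma>) - 1) + -2)" .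
  have "\<bar>u\<bar> powr (p * (1 - \<sigma>) - 1) * (v / u^2) powr p = v powr p * (A powr (p * (1 - \<sigma>) - 1) * A powr (-2 * p))"
    unfolding e3 A_def by (simp add: mult_ac)
  also have "\<dots> = v powr p * A powr (p * (1 - \<sigma>) - 1 + -2 * p)" by (simp only: powr_add)
  finally have R2: "\<bar>u\<bar> powr (p * (1 - \<sigma>) - 1) * (v / u^2) powr p = v powr p * A powr (p * (1 - \<sigma>) - 1 + -2 * p)" .
  have "- (p * (1 + \<sigma>) - 1) + -2 = p * (1 - \<sigma>) - 1 + -2 * p" by (simp add: algebra_simps)
  then show ?thesis unfolding L2 R2 by (simp only:)
qed simp

lemma I_minus:
  fixes f :: "real \<Rightarrow> real"
  assumes [measurable]: "f \<in> borel_measurable borel" and f: "\<And>x. f x \<ge> 0"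
  shows "Ifun f p \<sigma> (-1) = I1 (\<lambda>u. f (1 / u) / u^2) p \<sigma>"
proof -
  have "Ifun f p \<sigma> (-1) = (\<integral>\<^sup>+x. ennreal (\<bar>x\<bar> powr (p * (1 + \<sigma>) - 1) * f x powr p) \<partial>lborel)"
    unfolding Ifun_def by simp
  also have "\<dots> = (\<integral>\<^sup>+u. ennreal (\<bar>1 / u\<bar> powr (p * (1 + \<sigma>) - 1) * f (1 / u) powr p / u^2) \<partial>lborel)"
    by (rule nn_integral_inversion[where h="\<lambda>x. \<bar>x\<bar> powr (p * (1 + \<sigma>) - 1) * f x powr p"]) auto
  also have "\<dots> = I1 (\<lambda>u. f (1 / u) / u^2) p \<sigma>"
    unfolding I1_def by (intro nn_integral_cong arg_cong[where f=ennreal] pw_inv f)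
  finally show ?thesis .
qed

theorem lemma3:
  fixes p q \<sigma> :: real and \<delta> :: int and H f :: "real \<Rightarrow> real"
  assumes "p > 0" and "p \<noteq> 1" and "1 / p + 1 / q = 1"
    and "\<delta> \<in> {-1, 1}"
    and "H \<in> borel_measurable borel" and "\<And>t. H t \<ge> 0"
    and "f \<in> borel_measurable borel" and "\<And>x. f x \<ge> 0"
  shows "(p > 1 \<longrightarrow> Jfun H f p \<sigma> \<delta> \<le> enn_powr (Kfun H \<sigma>) p * Ifun f p \<sigma> \<delta>)
       \<and> (p < 1 \<longrightarrow> Jfun H f p \<sigma> \<delta> \<ge> enn_powr (Kfun H \<sigma>) p * Ifun f p \<sigma> \<delta>)"
proof -
  note [measurable] = assms(5) assms(7)
  from assms(4) consider "\<delta> = 1" | "\<delta> = -1" by auto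
  then show ?thesis
  proof cases
    case 1
    then show ?thesis using case_one[OF assms(5,6,7,8,1)] by (simp add: J_one I_one)
  next
    case 2
    have [measurable]: "(\<lambda>u. f (1 / u) / u^2) \<in> borel_measurable borel" by measurable
    have nn: "\<And>u. f (1 / u) / u^2 \<ge> 0" using assms(8) by simp
    show ?thesis unfolding 2 J_minus[OF assms(5,6,7,8)] I_minus[OF assms(7,8)]
      using case_one[OF assms(5,6) _ nn assms(1)] by simp
  qed
qed


end
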